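(* Let $\Lambda=(V,\pi,v,\le)$ be a bi-colored weighted ordered vertex with $r(\Lambda)=2$ and $|V_\bullet|=2$, identify $V=\{1,\dots,l\}$ via $\le$, and suppose $s(\Lambda)\ne0$. Then $l\ge3$ and: (1) if $V_\bullet=\{1,2\}$, then $s(\Lambda)=(-1)^{l-1}$; (2) if $V_\bullet=\{1,a\}$ with $a\ge3$, then $v(2)+\dots+v(a-2)<v(a-1)+v(a+1)+\dots+v(l)$, $v(2)+\dots+v(a-1)\ge v(a+1)+\dots+v(l)$, and $s(\Lambda)=(-1)^l$; (3) if $V_\bullet=\{2,3\}$, then $v(1)<v(4)+\dots+v(l)$ and $s(\Lambda)=(-1)^l$; (4) if $V_\bullet=\{2,a\}$ with $a\ge4$, then $v(1)+v(3)+\dots+v(a-2)<v(a-1)+v(a+1)+\dots+v(l)$, $v(1)+v(3)+\dots+v(a-1)\ge v(a+1)+\dots+v(l)$, and $s(\Lambda)=(-1)^{l-1}$.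
   Context: A bi-colored weighted ordered vertex is $\Lambda=(V,\pi,v,\le)$ with $V$ a finite set, $\pi\colon V\to\{\bullet,\circ\}$, $v\colon V\to\mathbb{Z}_{\ge1}$, $\le$ a total order on $V$. Put $V_\bullet=\pi^{-1}(\bullet)$, $V_\circ=\pi^{-1}(\circ)$, $r(\Lambda)=\sum_{i\in V_\bullet}v(i)$; $v_i=(v(i),0)$ if $i\in V_\bullet$, $v_i=(0,v(i))$ if $i\in V_\circ$. For $(r,n)\in\mathbb{Z}_{\ge0}^2\setminus\{0\}$ let $\mu(r,n)=n/r\in\mathbb{Q}\cup\{\infty\}$ ($\infty$ if $r=0$). For vectors $w_1,\dots,w_l$ define $s_l(w_1,\dots,w_l)=(-1)^k$ if for each $i=1,\dots,l-1$ either (a) $\mu(w_i)>\mu(w_{i+1})$ and $\mu(w_1+\dots+w_i)\ge\mu(w_{i+1}+\dots+w_l)$, or (b) $\mu(w_i)\le\mu(w_{i+1})$ and $\mu(w_1+\dots+w_i)<\mu(w_{i+1}+\dots+w_l)$, where $k$ is the number of $i$ satisfying (b); otherwise $s_l=0$. Set $s(\Lambda)=s_l(v_1,\dots,v_l)$, $l=|V|$. Empty sums are $0$. *)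

theory Defs
  imports Complex_Main "HOL-Library.Extended_Real"
begin

datatype color = Black | White

definition mu :: "nat \<times> nat \<Rightarrow> ereal" where
  "mu w = (if fst w = 0 then \<infinity> else ereal (real (snd w) / real (fst w)))"

definition vsum :: "(nat \<times> nat) list \<Rightarrow> nat \<times> nat" where
  "vsum ws = (sum_list (map fst ws), sum_list (map snd ws))"

text \<open>Conditions (a) and (b) for index i (1-based, 1 <= i <= l-1) of ws = [w_1,...,w_l].\<close>
definition condA :: "(nat \<times> nat) list \<Rightarrow> nat \<Rightarrow> bool" where
  "condA ws i = (mu (ws ! (i - 1)) > mu (ws ! i) \<and>
                 mu (vsum (take i ws)) \<ge> mu (vsum (drop i ws)))"

definition condB :: "(nat \<times> nat) list \<Rightarrow> nat \<Rightarrow> bool" where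
  "condB ws i = (mu (ws ! (i - 1)) \<le> mu (ws ! i) \<and>
                 mu (vsum (take i ws)) < mu (vsum (drop i ws)))"

definition s_l :: "(nat \<times> nat) list \<Rightarrow> int" where
  "s_l ws = (let l = length ws in
     if (\<forall>i\<in>{1..<l}. condA ws i \<or> condB ws i)
     then (-1) ^ card {i\<in>{1..<l}. condB ws i} else 0)"

text \<open>A bi-colored weighted ordered vertex with V identified with {1..l} via its order:
  colour col and weight v on {1..l}.  The vector v_i.\<close>
definition vvec :: "(nat \<Rightarrow> color) \<Rightarrow> (nat \<Rightarrow> nat) \<Rightarrow> nat \<Rightarrow> nat \<times> nat" where
  "vvec col v i = (if col i = Black then (v i, 0) else (0, v i))"

definition s_vertex :: "nat \<Rightarrow> (nat \<Rightarrow> color) \<Rightarrow> (nat \<Rightarrow> nat) \<Rightarrow> int" where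
  "s_vertex l col v = s_l (map (vvec col v) [1..<l+1])"

definition black_set :: "nat \<Rightarrow> (nat \<Rightarrow> color) \<Rightarrow> nat set" where
  "black_set l col = {i\<in>{1..l}. col i = Black}"

definition r_vertex :: "nat \<Rightarrow> (nat \<Rightarrow> color) \<Rightarrow> (nat \<Rightarrow> nat) \<Rightarrow> nat" where
  "r_vertex l col v = (\<Sum>i\<in>black_set l col. v i)"

end

theory Submission imports Defs begin
lemma vs_take: "i \<le> l \<Longrightarrow> vsum (take i (map f [1..<l+1])) = (\<Sum>j\<in>{1..i}. fst (f j), \<Sum>j\<in>{1..i}. snd (f j))"
proof -
  assume "i \<le> l"
  then have "take i [1..<l+1] = [1..<i+1]" using take_upt[of 1 i "l+1"] by (simp del: upt_Suc)
  then show ?thesis unfolding vsum_def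
    by (simp add: take_map sum_list_distinct_conv_sum_set atLeastLessThanSuc_atLeastAtMost del: upt_Suc)
qed
lemma vs_drop: "i \<le> l \<Longrightarrow> vsum (drop i (map f [1..<l+1])) = (\<Sum>j\<in>{i+1..l}. fst (f j), \<Sum>j\<in>{i+1..l}. snd (f j))"
proof -
  assume "i \<le> l"
  then have "drop i [1..<l+1] = [i+1..<l+1]" by (simp add: drop_upt)
  then show ?thesis unfolding vsum_def
    by (simp add: drop_map sum_list_distinct_conv_sum_set atLeastLessThanSuc_atLeastAtMost del: upt_Suc)
qed
lemma neg1: "m \<le> n \<Longrightarrow> even (n - m) \<Longrightarrow> (-1::int)^n = (-1)^m"
proof -
  assume "m \<le> n" "even (n - m)"
  then have "n = m + (n - m)" by simp
  then have "(-1::int)^n = (-1)^m * (-1)^(n-m)" by (metis power_add)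
  with \<open>even (n - m)\<close> show ?thesis by simp
qed
lemma mu0: "mu (Suc 0, n) = ereal (real n)" by (simp add: mu_def)
lemma mu1: "mu (1, n) = ereal (real n)" by (simp add: mu_def)
lemma mu_less: "mu (Suc 0, m) < mu (Suc 0, n) \<longleftrightarrow> m < n" by (simp add: mu_def)
lemma mu_le: "mu (Suc 0, m) \<le> mu (Suc 0, n) \<longleftrightarrow> m \<le> n" by (simp add: mu_def)

theorem lemma4p10:
  fixes l :: nat and col :: "nat \<Rightarrow> color" and v :: "nat \<Rightarrow> nat"
  assumes vpos: "\<forall>i\<in>{1..l}. v i \<ge> 1"
    and r2: "r_vertex l col v = 2"
    and card2: "card (black_set l col) = 2"
    and s_nz: "s_vertex l col v \<noteq> 0"
  shows "l \<ge> 3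
    \<and> (black_set l col = {1, 2} \<longrightarrow> s_vertex l col v = (-1) ^ (l - 1))
    \<and> (\<forall>a\<ge>3. black_set l col = {1, a} \<longrightarrow>
          (\<Sum>i=2..a-2. v i) < v (a - 1) + (\<Sum>i=a+1..l. v i)
        \<and> (\<Sum>i=2..a-1. v i) \<ge> (\<Sum>i=a+1..l. v i)
        \<and> s_vertex l col v = (-1) ^ l)
    \<and> (black_set l col = {2, 3} \<longrightarrow>
          v 1 < (\<Sum>i=4..l. v i) \<and> s_vertex l col v = (-1) ^ l)
    \<and> (\<forall>a\<ge>4. black_set l col = {2, a} \<longrightarrow>
          v 1 + (\<Sum>i=3..a-2. v i) < v (a - 1) + (\<Sum>i=a+1..l. v i)
        \<and> v 1 + (\<Sum>i=3..a-1. v i) \<ge> (\<Sum>i=a+1..l. v i)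
        \<and> s_vertex l col v = (-1) ^ (l - 1))"
proof -
  define B where "B = black_set l col"
  define ws where "ws = map (vvec col v) [1..<l+1]"
  have Bsub: "B \<subseteq> {1..l}" by (auto simp: B_def black_set_def)
  have colB: "\<And>j. j\<in>{1..l} \<Longrightarrow> col j = Black \<longleftrightarrow> j \<in> B" by (auto simp: B_def black_set_def)
  have cB: "card B = 2" using card2 B_def by simp
  then obtain p q where pq: "B = {p, q}" "p \<noteq> q" by (meson card_2_iff)
  have "sum v B = 2" using r2 by (simp add: r_vertex_def B_def)
  then have "v p + v q = 2" using pq by simp
  moreover have "v p \<ge> 1" "v q \<ge> 1" using vpos Bsub pq by auto
  ultimately have vB: "\<forall>j\<in>B. v j = 1" using pq by auto
  have len: "length ws = l" by (simp add: ws_def)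
  have nth: "\<And>j. 1 \<le> j \<Longrightarrow> j \<le> l \<Longrightarrow> ws ! (j - 1) = vvec col v j"
    by (simp add: ws_def nth_map del: upt_Suc)
  have muv: "\<And>j. j\<in>{1..l} \<Longrightarrow> mu (vvec col v j) = (if j \<in> B then 0 else \<infinity>)"
    using colB vB by (auto simp: vvec_def mu_def)
  have sdef: "s_vertex l col v = s_l ws" by (simp add: s_vertex_def ws_def)
  have all: "\<forall>i\<in>{1..<l}. condA ws i \<or> condB ws i"
    and sv: "s_vertex l col v = (-1) ^ card {i\<in>{1..<l}. condB ws i}"
    using s_nz unfolding sdef s_l_def Let_def len by (auto split: if_splits)
  have gt_iff: "(mu (ws!(i-1)) > mu (ws!i)) \<longleftrightarrow> (i\<notin>B \<and> i+1\<in>B)" if "i\<in>{1..<l}" for i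
  proof -
    have "ws ! i = ws ! ((i+1) - 1)" by simp
    then have "ws ! i = vvec col v (i+1)" using nth[of "i+1"] that by simp
    moreover have "ws!(i-1) = vvec col v i" using nth that by simp
    ultimately show ?thesis using muv[of i] muv[of "i+1"] that by auto
  qed
  have kB: "condB ws i \<longleftrightarrow> \<not>(i\<notin>B \<and> i+1\<in>B)" if "i\<in>{1..<l}" for i
    using all that gt_iff[OF that] unfolding condA_def condB_def by (auto simp: not_less)
  have preA: "mu (vsum (take i ws)) \<ge> mu (vsum (drop i ws))" if "i\<in>{1..<l}" "i\<notin>B" "i+1\<in>B" for i
    using all kB[of i] that unfolding condA_def by auto
  have preB: "mu (vsum (take i ws)) < mu (vsum (drop i ws))" if "i\<in>{1..<l}" "\<not>(i\<notin>B \<and> i+1\<in>B)" for i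
    using kB[of i] that unfolding condB_def by auto
  define T where "T = {i\<in>{1..<l}. i\<notin>B \<and> i+1\<in>B}"
  have "{i\<in>{1..<l}. condB ws i} = {1..<l} - T" using kB by (auto simp: T_def)
  then have sgn: "s_vertex l col v = (-1) ^ card ({1..<l} - T)" using sv by simp
  have fstsum: "(\<Sum>j\<in>I. fst (vvec col v j)) = card (I \<inter> B)" if "I \<subseteq> {1..l}" for I
  proof -
    have fin: "finite I" using that finite_subset by blast
    have "(\<Sum>j\<in>I. fst (vvec col v j)) = (\<Sum>j\<in>I. if j \<in> B then 1 else 0)"
      using that colB vB by (intro sum.cong) (auto simp: vvec_def)
    also have "\<dots> = card (I \<inter> B)" using fin by (simp add: sum.If_cases)
    finally show ?thesis .
  qed
  have sndsum: "(\<Sum>j\<in>I. snd (vvec col v j)) = sum v (I - B)" if "I \<subseteq> {1..l}" for I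
  proof -
    have fin: "finite I" using that finite_subset by blast
    have "(\<Sum>j\<in>I. snd (vvec col v j)) = (\<Sum>j\<in>I. if j \<in> B then 0 else v j)"
      using that colB vB by (intro sum.cong) (auto simp: vvec_def)
    also have "\<dots> = sum v (I - B)" using fin by (simp add: sum.If_cases Diff_eq)
    finally show ?thesis .
  qed
  have pre: "vsum (take i ws) = (card ({1..i} \<inter> B), sum v ({1..i} - B))" if "i \<le> l" for i
    using vs_take[OF that, of "vvec col v"] fstsum[of "{1..i}"] sndsum[of "{1..i}"] that
    by (simp add: ws_def del: upt_Suc)
  have suf: "vsum (drop i ws) = (card ({i+1..l} \<inter> B), sum v ({i+1..l} - B))" if "i \<le> l" for i
    using vs_drop[OF that, of "vvec col v"] fstsum[of "{i+1..l}"] sndsum[of "{i+1..l}"] that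
    by (simp add: ws_def del: upt_Suc)
  have l2: "l \<ge> 2" using cB Bsub by (metis card_atLeastAtMost card_mono finite_atLeastAtMost diff_Suc_1)
  have l3: "l \<ge> 3"
  proof (rule ccontr)
    assume "\<not> l \<ge> 3"
    then have l: "l = 2" using l2 by simp
    then have "B = {1,2}" using Bsub cB
      by (metis card_atLeastAtMost card_subset_eq finite_atLeastAtMost diff_Suc_1 atLeastAtMost_insertL
          atLeastAtMost_singleton numeral_2_eq_2 one_le_numeral Suc_1)
    then have "mu (vsum (take 1 ws)) < mu (vsum (drop 1 ws))" using preB[of 1] l by auto
    moreover have "{1..1::nat} \<inter> {1,2} = {1}" "{1..1::nat} - {1,2} = {}" "{2..2::nat} \<inter> {1,2} = {2}" "{2..2::nat} - {1,2} = {}" by auto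
    ultimately show False using pre[of 1] suf[of 1] l \<open>B = {1,2}\<close> by (simp add: mu1 numeral_2_eq_2)
  qed
  have c1: "s_vertex l col v = (-1) ^ (l - 1)" if B: "black_set l col = {1, 2}"
  proof -
    have "T = {}" using B by (auto simp: T_def B_def)
    then show ?thesis using sgn by simp
  qed
  have c2: "(\<Sum>i=2..a-2. v i) < v (a - 1) + (\<Sum>i=a+1..l. v i)
        \<and> (\<Sum>i=2..a-1. v i) \<ge> (\<Sum>i=a+1..l. v i)
        \<and> s_vertex l col v = (-1) ^ l" if a: "a \<ge> 3" and B': "black_set l col = {1, a}" for a
  proof -
    have B: "B = {1,a}" using B' B_def by simp
    have al: "a \<le> l" using B Bsub by auto
    have "T = {a-1}" using B a al by (auto simp: T_def)
    moreover have "a-1 \<in> {1..<l}" using a al by auto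
    ultimately have "card ({1..<l} - T) = l - 2" using card_Diff_singleton[of "a-1" "{1..<l}"] by simp
    then have s: "s_vertex l col v = (-1) ^ l" using sgn neg1[of "l-2" l] l3 by simp
    have "mu (vsum (take (a-2) ws)) < mu (vsum (drop (a-2) ws))" proof (rule preB)
      show "a-2 \<in> {1..<l}" using a al by auto
      have "a - 2 + 1 \<notin> B" using a B by auto
      then show "\<not> (a - 2 \<notin> B \<and> a - 2 + 1 \<in> B)" by blast
    qed
    moreover have "{1..a-2} \<inter> B = {1}" "{1..a-2} - B = {2..a-2}" "{a-2+1..l} \<inter> B = {a}"
      "{a-2+1..l} - B = insert (a-1) {a+1..l}" using a al B by auto
    ultimately have i1: "(\<Sum>i=2..a-2. v i) < v (a - 1) + (\<Sum>i=a+1..l. v i)"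
      using pre[of "a-2"] suf[of "a-2"] al by (simp add: mu_less mu_le)
    have "mu (vsum (take (a-1) ws)) \<ge> mu (vsum (drop (a-1) ws))" proof (rule preA)
      show "a-1 \<in> {1..<l}" using a al by auto
      show "a - 1 \<notin> B" using a B by auto
      show "a - 1 + 1 \<in> B" using a B by auto
    qed
    moreover have "{1..a-1} \<inter> B = {1}" "{1..a-1} - B = {2..a-1}" "{a-1+1..l} \<inter> B = {a}"
      "{a-1+1..l} - B = {a+1..l}" using a al B by auto
    ultimately have i2: "(\<Sum>i=2..a-1. v i) \<ge> (\<Sum>i=a+1..l. v i)"
      using pre[of "a-1"] suf[of "a-1"] al by (simp add: mu_less mu_le)
    show ?thesis using i1 i2 s by simp
  qed
  have c3: "v 1 < (\<Sum>i=4..l. v i) \<and> s_vertex l col v = (-1) ^ l" if B': "black_set l col = {2, 3}"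
  proof -
    have B: "B = {2,3}" using B' B_def by simp
    have "T = {1}" using B l3 by (auto simp: T_def)
    then have "card ({1..<l} - T) = l - 2" using l3 by simp
    then have s: "s_vertex l col v = (-1) ^ l" using sgn neg1[of "l-2" l] l3 by simp
    have "mu (vsum (take 2 ws)) < mu (vsum (drop 2 ws))" using preB[of 2] l3 B by auto
    moreover have "{1..2} \<inter> B = {2}" "{1..2} - B = {1}" "{2+1..l} \<inter> B = {3}"
      "{2+1..l} - B = {4..l}" using l3 B by auto
    ultimately have "v 1 < (\<Sum>i=4..l. v i)"
      using pre[of 2] suf[of 2] l3 by (simp add: mu_less mu_le)
    then show ?thesis using s by simp
  qed
  have c4: "v 1 + (\<Sum>i=3..a-2. v i) < v (a - 1) + (\<Sum>i=a+1..l. v i)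
        \<and> v 1 + (\<Sum>i=3..a-1. v i) \<ge> (\<Sum>i=a+1..l. v i)
        \<and> s_vertex l col v = (-1) ^ (l - 1)" if a: "a \<ge> 4" and B': "black_set l col = {2, a}" for a
  proof -
    have B: "B = {2,a}" using B' B_def by simp
    have al: "a \<le> l" using B Bsub by auto
    have "T = {1, a-1}" using B a al by (auto simp: T_def)
    moreover have "{1, a-1} \<subseteq> {1..<l}" "card {1::nat, a-1} = 2" using a al by auto
    ultimately have "card ({1..<l} - T) = l - 3" using card_Diff_subset[of "{1, a-1}" "{1..<l}"] by simp
    then have s: "s_vertex l col v = (-1) ^ (l - 1)" using sgn neg1[of "l-3" "l-1"] a al by simp
    have "mu (vsum (take (a-2) ws)) < mu (vsum (drop (a-2) ws))" proof (rule preB)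
      show "a-2 \<in> {1..<l}" using a al by auto
      have "a - 2 + 1 \<notin> B" using a B by auto
      then show "\<not> (a - 2 \<notin> B \<and> a - 2 + 1 \<in> B)" by blast
    qed
    moreover have "{1..a-2} \<inter> B = {2}" "{1..a-2} - B = insert 1 {3..a-2}" "{a-2+1..l} \<inter> B = {a}"
      "{a-2+1..l} - B = insert (a-1) {a+1..l}" using a al B by auto
    ultimately have i1: "v 1 + (\<Sum>i=3..a-2. v i) < v (a - 1) + (\<Sum>i=a+1..l. v i)"
      using pre[of "a-2"] suf[of "a-2"] al by (simp add: mu_less mu_le)
    have "mu (vsum (take (a-1) ws)) \<ge> mu (vsum (drop (a-1) ws))" proof (rule preA)
      show "a-1 \<in> {1..<l}" using a al by auto
      show "a - 1 \<notin> B" using a B by auto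
      show "a - 1 + 1 \<in> B" using a B by auto
    qed
    moreover have "{1..a-1} \<inter> B = {2}" "{1..a-1} - B = insert 1 {3..a-1}" "{a-1+1..l} \<inter> B = {a}"
      "{a-1+1..l} - B = {a+1..l}" using a al B by auto
    ultimately have i2: "v 1 + (\<Sum>i=3..a-1. v i) \<ge> (\<Sum>i=a+1..l. v i)"
      using pre[of "a-1"] suf[of "a-1"] al by (simp add: mu_less mu_le)
    show ?thesis using i1 i2 s by simp
  qed
  show ?thesis using l3 c1 c2 c3 c4 by blast
qed
end
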